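(* Let $\mathcal C$ be a concept hierarchy and $r_1\in[0,1]$. Let $\mathcal A_2$ be the network defined below. Then for every $B\subseteq C_0$ presented at time 0 and every concept $c\in C$ with $c\notin supp_{r_1}(B)$, the neuron $rep(c)$ does not fire at time $level(c)$ in $\mathcal A_2$ (that is, $\mathcal A_2$ guarantees $r_1$-non-firing for $\mathcal C$).
   Context: Concept hierarchies: fix positive integers $\ell_{max},n,k$. A universal set $D$ of concepts is partitioned into disjoint sets $D_0,\dots,D_{\ell_{max}}$ with $|D_0|=n$; $level(c)=\ell$ for $c\in D_\ell$. A concept hierarchy $\mathcal C$ consists of $C\subseteq D$, with $C_\ell=C\cap D_\ell$, and for each $c\in C_\ell$ with $1\le\ell\le\ell_{max}$ a set $children(c)\subseteq C_{\ell-1}$, such that $|C_{\ell_{max}}|=k$, $|children(c)|=k$ for all such $c$, and $children(c)\cap children(c')=\emptyset$ for distinct $c,c'\in C_\ell$. For $B\subseteq D_0$ and $r\in[0,1]$: $B(0)=B\cap C_0$; for $1\le\ell\le\ell_{max}$, $B(\ell)=\{c\in C_\ell:|children(c)\cap B(\ell-1)|\ge rk\}$; $supp_r(B)=\bigcup_{\ell}B(\ell)$. Network $\mathcal A_2$: neurons partitioned into layers $N_0,\dots,N_{\ell_{max}}$; no failures. Each $c\in D_0$ has a neuron $rep(c)\in N_0$ and each $c\in C$ with $level(c)\ge1$ a neuron $rep(c)\in N_{level(c)}$, all distinct. For $v\in N_\ell$, $\ell\ge1$, and $u\in N_{\ell-1}$, the edge weight $w(u,v)$ is $1$ if $v=rep(c)$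 and $u=rep(c')$ for some child $c'$ of $c$, and $0$ otherwise. Threshold $\tau=r_1k$. Input $B\subseteq C_0$ presented at time 0: layer-0 neurons in $\{rep(b):b\in B\}$ fire at time 0, other layer-0 neurons do not, and no layer-0 neuron fires at any other time. Every neuron $v$ in a layer $\ell\ge1$ does not fire at time 0 and fires at time $t\ge1$ iff $\sum_{u\in N_{\ell-1}}w(u,v)x_u(t-1)\ge\tau$, where $x_u(s)\in\{0,1\}$ indicates whether $u$ fires at time $s$. *)

theory Defs
  imports Main "HOL.Real"
begin

definition concept_hierarchy ::
  "'c set \<Rightarrow> ('c \<Rightarrow> nat) \<Rightarrow> nat \<Rightarrow> nat \<Rightarrow> nat \<Rightarrow> 'c set \<Rightarrow> ('c \<Rightarrow> 'c set) \<Rightarrow> bool" where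
  "concept_hierarchy D level lmax n k C children \<longleftrightarrow>
     0 < lmax \<and> 0 < n \<and> 0 < k \<and>
     (\<forall>c\<in>D. level c \<le> lmax) \<and>
     card {c\<in>D. level c = 0} = n \<and>
     C \<subseteq> D \<and>
     card {c\<in>C. level c = lmax} = k \<and>
     (\<forall>c\<in>C. 1 \<le> level c \<longrightarrow>
        children c \<subseteq> {c'\<in>C. level c' = level c - 1} \<and> card (children c) = k) \<and>
     (\<forall>c\<in>C. \<forall>c'\<in>C. 1 \<le> level c \<longrightarrow> level c' = level c \<longrightarrow> c \<noteq> c' \<longrightarrow>
        children c \<inter> children c' = {})"

fun Bset :: "'c set \<Rightarrow> ('c \<Rightarrow> nat) \<Rightarrow> nat \<Rightarrow> 'c set \<Rightarrow> ('c \<Rightarrow> 'c set) \<Rightarrow> real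
             \<Rightarrow> 'c set \<Rightarrow> nat \<Rightarrow> 'c set" where
  "Bset D level k C children r B 0 = B \<inter> {c\<in>C. level c = 0}"
| "Bset D level k C children r B (Suc l) =
     {c\<in>C. level c = Suc l \<and> real (card (children c \<inter> Bset D level k C children r B l)) \<ge> r * real k}"

definition supp :: "'c set \<Rightarrow> ('c \<Rightarrow> nat) \<Rightarrow> nat \<Rightarrow> nat \<Rightarrow> 'c set \<Rightarrow> ('c \<Rightarrow> 'c set) \<Rightarrow> real
             \<Rightarrow> 'c set \<Rightarrow> 'c set" where
  "supp D level lmax k C children r B = (\<Union>l\<in>{0..lmax}. Bset D level k C children r B l)"

definition network_A2_wf ::
  "'c set \<Rightarrow> ('c \<Rightarrow> nat) \<Rightarrow> nat \<Rightarrow> 'c set \<Rightarrow> 'n set \<Rightarrow> ('n \<Rightarrow> nat) \<Rightarrow> ('c \<Rightarrow> 'n) \<Rightarrow> bool" where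
  "network_A2_wf D level lmax C N layer rep \<longleftrightarrow>
     finite N \<and> (\<forall>v\<in>N. layer v \<le> lmax) \<and>
     (\<forall>c \<in> {c\<in>D. level c = 0} \<union> {c\<in>C. 1 \<le> level c}. rep c \<in> N \<and> layer (rep c) = level c) \<and>
     inj_on rep ({c\<in>D. level c = 0} \<union> {c\<in>C. 1 \<le> level c})"

definition weight_A2 :: "('c \<Rightarrow> nat) \<Rightarrow> 'c set \<Rightarrow> ('c \<Rightarrow> 'c set) \<Rightarrow> ('c \<Rightarrow> 'n) \<Rightarrow> 'n \<Rightarrow> 'n \<Rightarrow> real" where
  "weight_A2 level C children rep u v =
     (if \<exists>c\<in>C. 1 \<le> level c \<and> v = rep c \<and> (\<exists>c'\<in>children c. u = rep c') then 1 else 0)"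

primrec fires_A2 :: "('c \<Rightarrow> nat) \<Rightarrow> nat \<Rightarrow> 'c set \<Rightarrow> ('c \<Rightarrow> 'c set) \<Rightarrow> 'n set \<Rightarrow> ('n \<Rightarrow> nat)
      \<Rightarrow> ('c \<Rightarrow> 'n) \<Rightarrow> real \<Rightarrow> 'c set \<Rightarrow> nat \<Rightarrow> 'n \<Rightarrow> bool" where
  "fires_A2 level k C children N layer rep r1 B 0 v = (layer v = 0 \<and> v \<in> rep ` B)"
| "fires_A2 level k C children N layer rep r1 B (Suc t) v =
     (1 \<le> layer v \<and>
      (\<Sum>u\<in>{u\<in>N. layer u = layer v - 1}.
          weight_A2 level C children rep u v *
          (if fires_A2 level k C children N layer rep r1 B t u then 1 else 0)) \<ge> r1 * real k)"

end

theory Submission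
  imports Defs
begin

theorem theorem6p3:
  fixes D C :: "'c set" and level :: "'c \<Rightarrow> nat" and children :: "'c \<Rightarrow> 'c set"
    and lmax n k :: nat and r1 :: real
    and N :: "'n set" and layer :: "'n \<Rightarrow> nat" and rep :: "'c \<Rightarrow> 'n"
  assumes "concept_hierarchy D level lmax n k C children"
    and "0 \<le> r1" and "r1 \<le> 1"
    and "network_A2_wf D level lmax C N layer rep"
  shows "\<forall>B. B \<subseteq> {c\<in>C. level c = 0} \<longrightarrow>
           (\<forall>c\<in>C. c \<notin> supp D level lmax k C children r1 B \<longrightarrow>
              \<not> fires_A2 level k C children N layer rep r1 B (level c) (rep c))"
proof (intro allI impI ballI)
  fix B c
  assume B: "B \<subseteq> {c\<in>C. level c = 0}" and cC: "c \<in> C"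
    and ns: "c \<notin> supp D level lmax k C children r1 B"
  define dm where "dm = {c\<in>D. level c = 0} \<union> {c\<in>C. 1 \<le> level c}"
  have H: "concept_hierarchy D level lmax n k C children" by fact
  have W: "network_A2_wf D level lmax C N layer rep" by fact
  have CD: "C \<subseteq> D" and kpos: "0 < k" and lev: "\<forall>c\<in>D. level c \<le> lmax"
    and ch: "\<And>c. c\<in>C \<Longrightarrow> 1 \<le> level c \<Longrightarrow>
        children c \<subseteq> {c'\<in>C. level c' = level c - 1} \<and> card (children c) = k"
    using H unfolding concept_hierarchy_def by auto
  have finN: "finite N" and repN: "\<And>c. c \<in> dm \<Longrightarrow> rep c \<in> N \<and> layer (rep c) = level c"
    and inj: "inj_on rep dm"
    using W unfolding network_A2_wf_def dm_def by auto
  have Cdm: "C \<subseteq> dm" using CD unfolding dm_def by auto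
  let ?F = "fires_A2 level k C children N layer rep r1 B"
  let ?B = "Bset D level k C children r1 B"
  have key: "\<forall>c\<in>C. level c = l \<longrightarrow> (?F l (rep c) \<longleftrightarrow> c \<in> ?B l)" for l
  proof (induction l)
    case 0
    show ?case
    proof (intro ballI impI)
      fix c assume c: "c \<in> C" "level c = 0"
      have "rep c \<in> rep ` B \<longleftrightarrow> c \<in> B"
        proof (rule inj_on_image_mem_iff[OF inj])
        show "c \<in> dm" using c Cdm by blast
        show "B \<subseteq> dm" using B Cdm by blast
      qed
      moreover have "layer (rep c) = 0" using repN[of c] c Cdm by auto
      ultimately show "?F 0 (rep c) \<longleftrightarrow> c \<in> ?B 0"
        using c by simp
    qed
  next
    case (Suc l)
    show ?case
    proof (intro ballI impI)
      fix c assume c: "c \<in> C" "level c = Suc l"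
      have cdm: "c \<in> dm" using c Cdm by auto
      have lay: "layer (rep c) = Suc l" using repN cdm c by auto
      have chs: "children c \<subseteq> {c'\<in>C. level c' = l}" and ck: "card (children c) = k"
        using ch[OF c(1)] c by auto
      have finch: "finite (children c)" using ck kpos card_ge_0_finite by auto
      have chdm: "children c \<subseteq> dm" using chs Cdm by auto
      let ?S = "{u\<in>N. layer u = layer (rep c) - 1}"
      let ?A = "rep ` (children c \<inter> ?B l)"
      have w: "weight_A2 level C children rep u (rep c) = (if u \<in> rep ` children c then 1 else 0)" for u
      proof -
        have "(\<exists>c''\<in>C. 1 \<le> level c'' \<and> rep c = rep c'' \<and> (\<exists>c'\<in>children c''. u = rep c'))
              \<longleftrightarrow> u \<in> rep ` children c"
        proof
          assume "\<exists>c''\<in>C. 1 \<le> level c'' \<and> rep c = rep c'' \<and> (\<exists>c'\<in>children c''. u = rep c')"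
          then obtain c'' where "c'' \<in> C" "rep c = rep c''" "\<exists>c'\<in>children c''. u = rep c'" by blast
          moreover have "c'' = c" using inj cdm \<open>c'' \<in> C\<close> Cdm \<open>rep c = rep c''\<close>
            by (metis inj_on_def subsetD)
          ultimately show "u \<in> rep ` children c" by auto
        next
          assume "u \<in> rep ` children c"
          then show "\<exists>c''\<in>C. 1 \<le> level c'' \<and> rep c = rep c'' \<and> (\<exists>c'\<in>children c''. u = rep c')"
            using c by (intro bexI[of _ c]) auto
        qed
        then show ?thesis unfolding weight_A2_def by simp
      qed
      have f: "weight_A2 level C children rep u (rep c) * (if ?F l u then 1 else 0)
             = (if u \<in> ?A then 1 else (0::real))" if "u \<in> ?S" for u
      proof (cases "u \<in> rep ` children c")
        case True
        then obtain c' where c': "c' \<in> children c" "u = rep c'" by blast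
        have "c' \<in> C" "level c' = l" using c' chs by auto
        then have "?F l u \<longleftrightarrow> c' \<in> ?B l" using Suc.IH c' by auto
        moreover have "u \<in> ?A \<longleftrightarrow> c' \<in> ?B l"
          using inj chdm c' by (auto simp: inj_on_def subset_iff)
        ultimately show ?thesis using w True by simp
      next
        case False
        then show ?thesis using w by auto
      qed
      have AS: "?A \<subseteq> ?S" using chs chdm repN lay by fastforce
      have "(\<Sum>u\<in>?S. weight_A2 level C children rep u (rep c) * (if ?F l u then 1 else 0))
           = (\<Sum>u\<in>?S. of_bool (u \<in> ?A) :: real)"
        using f by (intro sum.cong) auto
      also have "\<dots> = real (card (?S \<inter> {u. u \<in> ?A}))" using finN by simp
      also have "?S \<inter> {u. u \<in> ?A} = ?A" using AS by auto
      also have "card ?A = card (children c \<inter> ?B l)"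
        using inj chdm by (intro card_image) (auto intro: inj_on_subset)
      finally have sumeq: "(\<Sum>u\<in>?S. weight_A2 level C children rep u (rep c) * (if ?F l u then 1 else 0))
           = real (card (children c \<inter> ?B l))" .
      show "?F (Suc l) (rep c) \<longleftrightarrow> c \<in> ?B (Suc l)"
        using sumeq lay c by simp
    qed
  qed
  have "level c \<le> lmax" using lev cC CD by auto
  then have "c \<notin> ?B (level c)" using ns unfolding supp_def by auto
  then show "\<not> ?F (level c) (rep c)" using key cC by blast
qed

end
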